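(* For every $i\in I^+$ and every $a=(a_j)_{j\in I}\in\mathbb{N}_0^{I}$, $$\Omega_i\, x^{a}=\Big(\prod_{l=-n}^{-i}q^{2a_l}\Big)\sum_{j=i}^{n}q^{\,j-i+(a_{1-j}+\cdots+a_{j-1})}\,x^{a+\varepsilon_{-j}+\varepsilon_j}$$ in $\mathcal X$, where $a_{1-j}+\cdots+a_{j-1}$ denotes the sum of $a_k$ over all $k\in I$ with $1-j\le k\le j-1$.
   Context: Let $\mathbf{k}$ be a field of characteristic $0$, $q\in\mathbf{k}$ invertible and not a root of unity, $n\ge 2$, $I=\{-n,\dots,-1,1,\dots,n\}$ (ordered as integers; $0\notin I$), $I^+=\{1,\dots,n\}$, $\lambda=q-q^{-1}$. The quantum symplectic space $\mathcal X$ is the $\mathbf{k}$-algebra generated by $x_i$ ($i\in I$) with defining relations $x_jx_i=qx_ix_j$ for $i<j$, $j\neq -i$, and $x_ix_{-i}=q^2x_{-i}x_i+q^2\lambda\Omega_{i+1}$ for $i\in I^+$, where $\Omega_i=\sum_{j=i}^{n}q^{j-i}x_{-j}x_j$ for $i\in I^+$ and $\Omega_{n+1}=0$. For $a=(a_i)_{i\in I}\in\mathbb{N}_0^{I}$ put $x^a=x_{-n}^{a_{-n}}x_{1-n}^{a_{1-n}}\cdots x_{-1}^{a_{-1}}x_1^{a_1}\cdots x_n^{a_n}$ (a normal monomial: factors in increasing order of index); the normal monomials form a $\mathbf{k}$-basis of $\mathcal X$. $\varepsilon_i$ ($i\in I$) denotes the standard unit vector in $\mathbb{Z}^{I}$.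 *)

theory Defs
  imports Main
begin

definition idx_list :: "nat \<Rightarrow> int list" where
  "idx_list n = [- int n .. -1] @ [1 .. int n]"

definition idx_set :: "nat \<Rightarrow> int set" where
  "idx_set n = {- int n .. -1} \<union> {1 .. int n}"

definition Omega :: "('k::field \<Rightarrow> 'b::ring_1) \<Rightarrow> 'k \<Rightarrow> (int \<Rightarrow> 'b) \<Rightarrow> nat \<Rightarrow> int \<Rightarrow> 'b" where
  "Omega emb q x n i = (\<Sum>j\<in>{i .. int n}. emb (q ^ nat (j - i)) * x (- j) * x j)"

definition normal_monomial :: "(int \<Rightarrow> 'b::ring_1) \<Rightarrow> nat \<Rightarrow> (int \<Rightarrow> nat) \<Rightarrow> 'b" where
  "normal_monomial x n a = prod_list (map (\<lambda>k. x k ^ a k) (idx_list n))"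

definition add_pair :: "(int \<Rightarrow> nat) \<Rightarrow> int \<Rightarrow> (int \<Rightarrow> nat)" where
  "add_pair a j = (\<lambda>k. a k + (if k = - j then 1 else 0) + (if k = j then 1 else 0))"

text \<open>The defining relations of the quantum symplectic space, for elements x_i of a
  ring B which is a k-algebra via the central ring homomorphism emb.\<close>
definition qsymp_rel :: "('k::field \<Rightarrow> 'b::ring_1) \<Rightarrow> 'k \<Rightarrow> nat \<Rightarrow> (int \<Rightarrow> 'b) \<Rightarrow> bool" where
  "qsymp_rel emb q n x \<longleftrightarrow>
     (\<forall>i\<in>idx_set n. \<forall>j\<in>idx_set n. i < j \<and> j \<noteq> - i \<longrightarrow> x j * x i = emb q * x i * x j) \<and>
     (\<forall>i\<in>{1 .. int n}. x i * x (- i) =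
         emb (q ^ 2) * x (- i) * x i + emb (q ^ 2 * (q - inverse q)) * Omega emb q x n (i + 1))"

definition central_hom :: "('k::field \<Rightarrow> 'b::ring_1) \<Rightarrow> bool" where
  "central_hom emb \<longleftrightarrow> emb 1 = 1 \<and> (\<forall>c d. emb (c + d) = emb c + emb d) \<and>
     (\<forall>c d. emb (c * d) = emb c * emb d) \<and> (\<forall>c y. emb c * y = y * emb c)"

end

theory Submission
  imports Defs
begin

definition Gm :: "(int \<Rightarrow> 'b::ring_1) \<Rightarrow> (int \<Rightarrow> nat) \<Rightarrow> int \<Rightarrow> 'b" where
  "Gm x a k = (if k = 0 then 1 else x k ^ a k)"
definition bz :: "(int \<Rightarrow> nat) \<Rightarrow> int \<Rightarrow> nat" where
  "bz a k = (if k = 0 then 0 else a k)"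

lemma upto_app: "a \<le> b+1 \<Longrightarrow> b \<le> c \<Longrightarrow> [a..c] = [a..b] @ [b+1..c]"
proof (cases "a \<le> b")
  case True
  assume "b \<le> c"
  then show ?thesis using upto_split2[OF True] by blast
next
  case False
  assume "a \<le> b+1"
  then have "a = b+1" using False by simp
  then show ?thesis by simp
qed

lemma prod_list_pow: "prod_list (map (\<lambda>l. (q::'k::comm_monoid_mult) ^ f l) L) = q ^ sum_list (map f L)"
  by (induction L) (simp_all add: power_add)

lemma prod_list_one: "prod_list (map (\<lambda>l. 1::'k::monoid_mult) L) = 1"
  by (induction L) simp_all

lemma NM: "normal_monomial x n a = prod_list (map (Gm x a) [-int n..int n])"
proof -
  have "[-int n..int n] = [-int n..-1] @ [0..int n]" using upto_app[of "-int n" "-1" "int n"] by simp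
  also have "[0..int n] = 0 # [1..int n]" using upto_rec1[of 0 "int n"] by simp
  finally have e: "[-int n..int n] = [-int n..-1] @ 0 # [1..int n]" .
  have m1: "map (Gm x a) [-int n..-1] = map (\<lambda>k. x k ^ a k) [-int n..-1]"
    by (rule map_cong) (auto simp: Gm_def)
  have m2: "map (Gm x a) [1..int n] = map (\<lambda>k. x k ^ a k) [1..int n]"
    by (rule map_cong) (auto simp: Gm_def)
  have "prod_list (map (Gm x a) [-int n..int n]) = prod_list (map (Gm x a) [-int n..-1]) * prod_list (map (Gm x a) [1..int n])"
    unfolding e by (simp add: Gm_def)
  then show ?thesis unfolding normal_monomial_def idx_list_def m1 m2 by simp
qed


context
  fixes emb :: "'k::field \<Rightarrow> 'b::ring_1" and q :: 'k and n :: nat and x :: "int \<Rightarrow> 'b"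
  assumes ch: "central_hom emb" and rel: "qsymp_rel emb q n x" and qnz: "q \<noteq> 0"
begin

lemma emb_mult: "emb (c*d) = emb c * emb d" using ch unfolding central_hom_def by blast
lemma emb_add: "emb (c+d) = emb c + emb d" using ch unfolding central_hom_def by blast
lemma emb_one: "emb 1 = 1" using ch unfolding central_hom_def by blast
lemma emb_comm: "emb c * y = y * emb c" using ch unfolding central_hom_def by blast
lemma emb_zero: "emb 0 = 0" using emb_add[of 0 0] by simp
lemma emb_lc: "y * (emb c * z) = emb c * (y * z)" by (metis emb_comm mult.assoc)

lemma prod_comm_l:
  assumes h: "\<And>k. k \<in> set L \<Longrightarrow> y * g k = emb (s k) * g k * y"
  shows "y * prod_list (map g L) = emb (prod_list (map s L)) * prod_list (map g L) * y"
  using h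
proof (induction L)
  case Nil then show ?case by (simp add: emb_one)
next
  case (Cons k L)
  have IH: "y * prod_list (map g L) = emb (prod_list (map s L)) * prod_list (map g L) * y" using Cons by simp
  have hk: "y * g k = emb (s k) * g k * y" using Cons by simp
  have "y * prod_list (map g (k#L)) = (y * g k) * prod_list (map g L)" by (simp add: mult.assoc)
  also have "... = emb (s k) * g k * (y * prod_list (map g L))" by (simp add: hk mult.assoc)
  also have "... = emb (s k) * (g k * (emb (prod_list (map s L)) * (prod_list (map g L) * y)))" by (simp add: IH mult.assoc)
  also have "... = emb (s k) * emb (prod_list (map s L)) * (g k * prod_list (map g L) * y)" by (simp add: emb_lc[of "g k"] mult.assoc)
  also have "... = emb (prod_list (map s (k#L))) * prod_list (map g (k#L)) * y" by (simp add: emb_mult mult.assoc)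
  finally show ?case .
qed

lemma prod_comm_r:
  assumes h: "\<And>k. k \<in> set L \<Longrightarrow> g k * y = emb (s k) * y * g k"
  shows "prod_list (map g L) * y = emb (prod_list (map s L)) * y * prod_list (map g L)"
  using h
proof (induction L rule: rev_induct)
  case Nil then show ?case by (simp add: emb_one)
next
  case (snoc k L)
  have IH: "prod_list (map g L) * y = emb (prod_list (map s L)) * y * prod_list (map g L)" using snoc by simp
  have hk: "g k * y = emb (s k) * y * g k" using snoc by simp
  have "prod_list (map g (L@[k])) * y = prod_list (map g L) * (g k * y)" by (simp add: mult.assoc)
  also have "... = emb (s k) * (prod_list (map g L) * y) * g k" by (simp add: hk mult.assoc emb_lc[of "prod_list (map g L)"])
  also have "... = emb (s k) * emb (prod_list (map s L)) * y * (prod_list (map g L) * g k)" by (simp add: IH mult.assoc)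
  also have "... = emb (prod_list (map s (L@[k]))) * y * prod_list (map g (L@[k]))"
  proof -
    have c: "emb (s k) * (emb (prod_list (map s L)) * w) = emb (prod_list (map s L)) * (emb (s k) * w)" for w
      by (metis emb_comm mult.assoc)
    show ?thesis by (simp add: emb_mult mult.assoc c)
  qed
  finally show ?case .
qed

lemma pow_comm_l:
  assumes "y * z = emb c * z * y"
  shows "y * z ^ m = emb (c ^ m) * z ^ m * y"
proof (induction m)
  case 0 then show ?case by (simp add: emb_one)
next
  case (Suc m)
  have "y * z ^ Suc m = (y * z) * z ^ m" by (simp add: mult.assoc)
  also have "... = emb c * (z * (y * z ^ m))" using assms by (simp add: mult.assoc)
  also have "... = emb c * (z * (emb (c^m) * (z ^ m * y)))" using Suc by (simp add: mult.assoc)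
  also have "... = emb (c ^ Suc m) * z ^ Suc m * y" by (simp add: emb_lc[of z] emb_mult mult.assoc power_Suc)
  finally show ?case .
qed

lemma pow_comm_r:
  assumes "z * y = emb c * y * z"
  shows "z ^ m * y = emb (c ^ m) * y * z ^ m"
proof (induction m)
  case 0 then show ?case by (simp add: emb_one)
next
  case (Suc m)
  have "z ^ Suc m * y = z ^ m * (z * y)" by (simp only: mult.assoc power_Suc2)
  also have "... = emb c * (z ^ m * y) * z" using assms by (simp add: mult.assoc emb_lc[of "z^m"])
  also have "... = emb c * (emb (c^m) * y * z ^ m) * z" using Suc by simp
  also have "... = emb (c ^ Suc m) * y * z ^ Suc m" by (simp only: emb_mult mult.assoc power_Suc2[of z] emb_lc[of "z^m"] power_Suc[of c])
  finally show ?case .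
qed

lemma emb_pow: "emb (c ^ m) = emb c ^ m"
  by (induction m) (simp_all add: emb_one emb_mult)

lemma idx_iff: "k \<in> idx_set n \<longleftrightarrow> k \<noteq> 0 \<and> - int n \<le> k \<and> k \<le> int n"
  unfolding idx_set_def by auto

lemma R1: "i \<in> idx_set n \<Longrightarrow> j \<in> idx_set n \<Longrightarrow> i < j \<Longrightarrow> j \<noteq> - i \<Longrightarrow> x j * x i = emb q * x i * x j"
  using rel unfolding qsymp_rel_def by blast

lemma R2: "1 \<le> k \<Longrightarrow> k \<le> int n \<Longrightarrow> x k * x (-k) = emb (q^2) * x (-k) * x k + emb (q^2*(q - inverse q)) * Omega emb q x n (k+1)"
  using rel unfolding qsymp_rel_def by auto


lemma comm_pair:
  assumes "1 \<le> j" "j \<le> int n" "l \<in> idx_set n" "-j < l" "l < j"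
  shows "x(-j) * x j * x l = x l * (x(-j) * x j)"
proof -
  have m: "-j \<in> idx_set n" "j \<in> idx_set n" using assms by (auto simp: idx_iff)
  have h1: "x l * x(-j) = emb q * x(-j) * x l" using R1[of "-j" l] m assms by auto
  have h2: "x j * x l = emb q * x l * x j" using R1[of l j] m assms by auto
  have "x(-j)*x j*x l = x(-j)*(x j*x l)" by (simp add: mult.assoc)
  also have "... = emb q * (x(-j) * (x l * x j))" by (simp add: h2 mult.assoc emb_lc[of "x(-j)"])
  also have "... = (x l * x(-j)) * x j" by (simp add: h1 mult.assoc)
  finally show ?thesis by (simp add: mult.assoc)
qed

lemma Om_comm:
  assumes "1 \<le> i" "l \<in> idx_set n" "-i < l" "l < i"
  shows "Omega emb q x n i * x l = x l * Omega emb q x n i"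
  unfolding Omega_def sum_distrib_right sum_distrib_left
proof (rule sum.cong[OF refl])
  fix j assume j: "j \<in> {i..int n}"
  have "x(-j) * x j * x l = x l * (x(-j) * x j)" using comm_pair[of j l] j assms by auto
  then show "emb (q ^ nat (j - i)) * x (- j) * x j * x l = x l * (emb (q ^ nat (j - i)) * x (- j) * x j)"
    by (simp add: mult.assoc emb_lc[of "x l"])
qed

lemma comm_neg:
  assumes "1 \<le> j" "j < k" "k \<le> int n"
  shows "x(-j) * x j * x(-k) = emb(q^2) * x(-k) * (x(-j) * x j)"
proof -
  have m: "-j \<in> idx_set n" "j \<in> idx_set n" "-k \<in> idx_set n" using assms by (auto simp: idx_iff)
  have h1: "x(-j) * x(-k) = emb q * x(-k) * x(-j)" using R1[of "-k" "-j"] m assms by auto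
  have h2: "x j * x(-k) = emb q * x(-k) * x j" using R1[of "-k" j] m assms by auto
  have "x(-j)*x j*x(-k) = x(-j)*(x j*x(-k))" by (simp add: mult.assoc)
  also have "... = emb q * ((x(-j) * x(-k)) * x j)" by (simp add: h2 mult.assoc emb_lc[of "x(-j)"])
  also have "... = emb q * emb q * (x(-k) * (x(-j) * x j))" by (simp add: h1 mult.assoc)
  finally show ?thesis by (simp add: mult.assoc emb_mult power2_eq_square)
qed

lemma Om_split:
  assumes "1 \<le> i" "i \<le> k" "k \<le> int n"
  shows "Omega emb q x n i = (\<Sum>j\<in>{i..k-1}. emb (q ^ nat (j - i)) * x (- j) * x j)
     + emb (q ^ nat (k - i)) * x (- k) * x k + emb (q ^ nat (k - i) * q) * Omega emb q x n (k+1)"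
proof -
  have s1: "{i..int n} = {i..k-1} \<union> insert k {k+1..int n}" using assms by auto
  have tail: "(\<Sum>j\<in>{k+1..int n}. emb (q ^ nat (j - i)) * x (- j) * x j) = emb (q ^ nat (k - i) * q) * Omega emb q x n (k+1)"
    unfolding Omega_def sum_distrib_left
  proof (rule sum.cong[OF refl])
    fix j assume j: "j \<in> {k+1..int n}"
    have "nat (j - i) = (nat (k - i) + 1) + nat (j - (k+1))" using j assms by auto
    then have "q ^ nat (j - i) = (q ^ nat (k - i) * q) * q ^ nat (j - (k+1))" by (simp add: power_add)
    then show "emb (q ^ nat (j - i)) * x (- j) * x j = emb (q ^ nat (k - i) * q) * (emb (q ^ nat (j - (k + 1))) * x (- j) * x j)"
      by (simp add: emb_mult mult.assoc)
  qed
  let ?T = "\<lambda>j. emb (q ^ nat (j - i)) * x (- j) * x j"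
  have e1: "Omega emb q x n i = sum ?T {i..k-1} + sum ?T (insert k {k+1..int n})"
    unfolding Omega_def s1 by (rule sum.union_disjoint) auto
  have e2: "sum ?T (insert k {k+1..int n}) = ?T k + sum ?T {k+1..int n}"
    by (rule sum.insert) auto
  show ?thesis unfolding e1 e2 tail by (simp only: add.assoc)
qed


lemma emb_lc_x: "x l * (emb c * z) = emb c * (x l * z)" by (rule emb_lc)
lemma emb_lc_O: "Omega emb q x n l * (emb c * z) = emb c * (Omega emb q x n l * z)" by (rule emb_lc)
lemma emb_mult2: "emb c * (emb d * z) = emb (c*d) * z" by (simp add: emb_mult mult.assoc)
lemmas nrm = mult.assoc emb_lc_x emb_lc_O emb_mult2

lemma emb_swap: "emb a * (emb b * y * z) = emb b * y * (emb a * z)"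
proof -
  have "emb a * (emb b * y * z) = emb a * emb b * y * z" by (simp add: mult.assoc)
  also have "... = emb b * emb a * y * z" by (simp add: emb_mult[symmetric] mult.commute)
  also have "... = emb b * (emb a * y) * z" by (simp add: mult.assoc)
  also have "... = emb b * (y * emb a) * z" by (simp only: emb_comm[of a y])
  also have "... = emb b * y * (emb a * z)" by (simp only: mult.assoc)
  finally show ?thesis .
qed

lemma Om_neg:
  assumes "1 \<le> i" "i \<le> k" "k \<le> int n"
  shows "Omega emb q x n i * x(-k) = emb(q^2) * x(-k) * Omega emb q x n i"
proof -
  define S where "S = (\<Sum>j\<in>{i..k-1}. emb (q ^ nat (j - i)) * x (- j) * x j)"
  define c where "c = q ^ nat (k - i)"
  define O1 where "O1 = Omega emb q x n (k+1)"
  define lam where "lam = q^2*(q - inverse q)"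
  have sp: "Omega emb q x n i = S + emb c * x(-k) * x k + emb(c*q) * O1"
    using Om_split[OF assms] unfolding S_def c_def O1_def .
  have hS: "S * x(-k) = emb(q^2) * x(-k) * S"
    unfolding S_def sum_distrib_right sum_distrib_left
  proof (rule sum.cong[OF refl])
    fix j assume j: "j \<in> {i..k-1}"
    have h: "x(-j)*x j*x(-k) = emb(q^2)*x(-k)*(x(-j)*x j)" using comm_neg[of j k] j assms by auto
    have "emb (q ^ nat (j - i)) * x (- j) * x j * x (- k) = emb (q ^ nat (j - i)) * (x(-j)*x j*x(-k))"
      by (simp add: mult.assoc)
    also have "... = emb (q ^ 2) * x (- k) * (emb (q ^ nat (j - i)) * (x(-j)*x j))"
      unfolding h by (rule emb_swap)
    finally show "emb (q ^ nat (j - i)) * x (- j) * x j * x (- k) = emb (q ^ 2) * x (- k) * (emb (q ^ nat (j - i)) * x (- j) * x j)"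
      by (simp add: mult.assoc)
  qed
  have hO1: "O1 * x(-k) = x(-k) * O1"
    unfolding O1_def using assms by (intro Om_comm) (auto simp: idx_iff)
  have R2k: "x k * x(-k) = emb(q^2)*x(-k)*x k + emb lam * O1"
    using R2[of k] assms unfolding lam_def O1_def by auto
  have t2: "emb c * x(-k) * x k * x(-k) = emb(q^2) * x(-k) * (emb c * x(-k) * x k) + emb(c*lam) * x(-k) * O1"
  proof -
    have "emb c * x(-k) * x k * x(-k) = emb c * x(-k) * (x k * x(-k))" by (simp add: mult.assoc)
    also have "... = emb c * x(-k) * (emb(q^2)*x(-k)*x k) + emb c * x(-k) * (emb lam * O1)"
      unfolding R2k by (simp add: distrib_left)
    also have "emb c * x(-k) * (emb(q^2)*x(-k)*x k) = emb(q^2) * x(-k) * (emb c * x(-k) * x k)"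
      by (simp add: nrm mult_ac)
    also have "emb c * x(-k) * (emb lam * O1) = emb(c*lam) * x(-k) * O1"
      by (simp add: nrm mult_ac)
    finally show ?thesis .
  qed
  have t3: "emb(c*q) * O1 * x(-k) = emb(c*q) * x(-k) * O1" by (simp add: mult.assoc hO1)
  have sc: "c*lam + c*q = q^2*(c*q)" unfolding lam_def using qnz
    by (simp add: field_simps power2_eq_square)
  have t4: "emb(c*lam) * x(-k) * O1 + emb(c*q) * x(-k) * O1 = emb(q^2) * x(-k) * (emb(c*q) * O1)"
  proof -
    have "emb(c*lam) * x(-k) * O1 + emb(c*q) * x(-k) * O1 = emb(c*lam + c*q) * x(-k) * O1"
      by (simp add: emb_add distrib_right)
    also have "... = emb(q^2) * x(-k) * (emb(c*q) * O1)" unfolding sc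
      by (simp add: nrm mult_ac)
    finally show ?thesis .
  qed
  have "Omega emb q x n i * x(-k) = S * x(-k) + emb c * x(-k) * x k * x(-k) + emb(c*q) * O1 * x(-k)"
    unfolding sp by (simp add: distrib_right)
  also have "... = emb(q^2) * x(-k) * S + emb(q^2) * x(-k) * (emb c * x(-k) * x k) + emb(q^2) * x(-k) * (emb(c*q) * O1)"
    unfolding hS t2 t3 using t4 by (simp add: add.assoc)
  also have "... = emb(q^2) * x(-k) * Omega emb q x n i"
    unfolding sp by (simp add: distrib_left)
  finally show ?thesis .
qed


lemma Om_P1:
  assumes "1 \<le> i" "i \<le> int n"
  shows "Omega emb q x n i * prod_list (map (Gm x a) [-int n..i-1])
     = emb (\<Prod>l\<in>{- int n .. - i}. q ^ (2 * a l)) * prod_list (map (Gm x a) [-int n..i-1]) * Omega emb q x n i"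
proof -
  let ?O = "Omega emb q x n i"
  have sp: "[-int n..i-1] = [-int n..-i] @ [1-i..i-1]" using upto_app[of "-int n" "-i" "i-1"] assms by simp
  have hA: "?O * prod_list (map (Gm x a) [-int n..-i]) = emb (prod_list (map (\<lambda>l. q ^ (2 * a l)) [-int n..-i])) * prod_list (map (Gm x a) [-int n..-i]) * ?O"
  proof (rule prod_comm_l)
    fix l assume l: "l \<in> set [-int n..-i]"
    have "?O * x (-(-l)) = emb(q^2) * x(-(-l)) * ?O" using l assms by (intro Om_neg) auto
    then have "?O * x l ^ a l = emb ((q^2) ^ a l) * x l ^ a l * ?O" by (intro pow_comm_l) simp
    then show "?O * Gm x a l = emb (q ^ (2 * a l)) * Gm x a l * ?O" using l assms
      by (simp add: Gm_def power_mult)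
  qed
  have hB: "?O * prod_list (map (Gm x a) [1-i..i-1]) = emb (prod_list (map (\<lambda>l. 1) [1-i..i-1])) * prod_list (map (Gm x a) [1-i..i-1]) * ?O"
  proof (rule prod_comm_l)
    fix l assume l: "l \<in> set [1-i..i-1]"
    show "?O * Gm x a l = emb 1 * Gm x a l * ?O"
    proof (cases "l = 0")
      case True then show ?thesis by (simp add: Gm_def emb_one)
    next
      case False
      have "?O * x l = emb 1 * x l * ?O" using l assms False
        by (simp add: emb_one, intro Om_comm) (auto simp: idx_iff)
      then have "?O * x l ^ a l = emb (1 ^ a l) * x l ^ a l * ?O" by (rule pow_comm_l)
      then show ?thesis using False by (simp add: Gm_def)
    qed
  qed
  have pe: "prod_list (map (\<lambda>l. q ^ (2 * a l)) [-int n..-i]) = (\<Prod>l\<in>{- int n .. - i}. q ^ (2 * a l))"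
    using prod.distinct_set_conv_list[of "[-int n..-i]" "\<lambda>l. q^(2*a l)"] by simp
  have hB': "?O * prod_list (map (Gm x a) [1-i..i-1]) = prod_list (map (Gm x a) [1-i..i-1]) * ?O"
    using hB by (simp add: prod_list_one emb_one)
  let ?A = "prod_list (map (Gm x a) [-int n..-i])"
  let ?B = "prod_list (map (Gm x a) [1-i..i-1])"
  have "?O * (?A * ?B) = (?O * ?A) * ?B" by (simp only: mult.assoc)
  also have "... = emb (\<Prod>l\<in>{- int n .. - i}. q ^ (2 * a l)) * ?A * (?O * ?B)"
    unfolding hA pe by (simp only: mult.assoc)
  also have "... = emb (\<Prod>l\<in>{- int n .. - i}. q ^ (2 * a l)) * (?A * ?B) * ?O"
    unfolding hB' by (simp only: mult.assoc)
  finally show ?thesis unfolding sp prod_list.append map_append .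
qed


lemma comm_mid1:
  assumes "1 \<le> j" "j \<le> int n" "l \<in> {1-j..j-1}"
  shows "Gm x a l * x(-j) = emb (q^(bz a l)) * x(-j) * Gm x a l"
proof (cases "l = 0")
  case True then show ?thesis by (simp add: Gm_def bz_def emb_one)
next
  case False
  have m: "-j \<in> idx_set n" "l \<in> idx_set n" using assms False by (auto simp: idx_iff)
  have "x l * x(-j) = emb q * x(-j) * x l" using R1[of "-j" l] m assms by auto
  then have "x l ^ a l * x(-j) = emb (q ^ a l) * x(-j) * x l ^ a l" by (rule pow_comm_r)
  then show ?thesis using False by (simp add: Gm_def bz_def)
qed

lemma comm_mid2:
  assumes "1 \<le> j" "j \<le> int n" "l \<in> {1-j..j-1}"
  shows "x j * Gm x a l = emb (q^(bz a l)) * Gm x a l * x j"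
proof (cases "l = 0")
  case True then show ?thesis by (simp add: Gm_def bz_def emb_one)
next
  case False
  have m: "j \<in> idx_set n" "l \<in> idx_set n" using assms False by (auto simp: idx_iff)
  have "x j * x l = emb q * x l * x j" using R1[of l j] m assms by auto
  then have "x j * x l ^ a l = emb (q ^ a l) * x l ^ a l * x j" by (rule pow_comm_l)
  then show ?thesis using False by (simp add: Gm_def bz_def)
qed

lemma bz_sum: "sum_list (map (bz a) [1-j..j-1]) = (\<Sum>k\<in>{1-j..j-1} - {0}. a k)"
proof -
  have "sum_list (map (bz a) [1-j..j-1]) = sum (bz a) {1-j..j-1}"
    by (simp add: interv_sum_list_conv_sum_set_int)
  also have "... = sum (bz a) ({1-j..j-1} - {0})"
    by (rule sum.mono_neutral_right) (auto simp: bz_def)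
  also have "... = (\<Sum>k\<in>{1-j..j-1} - {0}. a k)"
    by (rule sum.cong) (auto simp: bz_def)
  finally show ?thesis .
qed

lemma stepC:
  assumes "1 \<le> i" "i \<le> j" "j \<le> int n"
  shows "prod_list (map (Gm x a) [-int n..i-1]) * (x(-j) * x j) * prod_list (map (Gm x a) [i..int n])
     = emb (q ^ (\<Sum>k\<in>{1-j..j-1} - {0}. a k)) * normal_monomial x n (add_pair a j)"
proof -
  define A where "A = [-int n..-j-1]"
  define D where "D = [1-j..i-1]"
  define E where "E = [i..j-1]"
  define C where "C = [j+1..int n]"
  define a' where "a' = add_pair a j"
  have s0: "[-j..i-1] = -j # D" unfolding D_def using upto_rec1[of "-j" "i-1"] assms by simp
  have s1: "[-int n..i-1] = A @ (-j) # D"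
    unfolding A_def s0[symmetric] using upto_app[of "-int n" "-j-1" "i-1"] assms by simp
  have s2: "[i..int n] = E @ j # C" unfolding E_def C_def
    using upto_split3[of i j "int n"] assms by simp
  have s4: "[1-j..j-1] = D @ E" unfolding D_def E_def using upto_app[of "1-j" "i-1" "j-1"] assms by simp
  have s5: "[-j..int n] = -j # [1-j..int n]" using upto_rec1[of "-j" "int n"] assms by simp
  have s6: "[1-j..int n] = [1-j..j-1] @ j # C" unfolding C_def using upto_split3[of "1-j" j "int n"] assms by simp
  have s3: "[-int n..int n] = A @ (-j) # (D @ E) @ j # C"
    unfolding A_def s4[symmetric] s6[symmetric] s5[symmetric] using upto_app[of "-int n" "-j-1" "int n"] assms by simp
  have mA: "map (Gm x a') A = map (Gm x a) A" unfolding A_def a'_def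
    by (rule map_cong) (use assms in \<open>auto simp: Gm_def add_pair_def\<close>)
  have mD: "map (Gm x a') D = map (Gm x a) D" unfolding D_def a'_def
    by (rule map_cong) (use assms in \<open>auto simp: Gm_def add_pair_def\<close>)
  have mE: "map (Gm x a') E = map (Gm x a) E" unfolding E_def a'_def
    by (rule map_cong) (use assms in \<open>auto simp: Gm_def add_pair_def\<close>)
  have mC: "map (Gm x a') C = map (Gm x a) C" unfolding C_def a'_def
    by (rule map_cong) (use assms in \<open>auto simp: Gm_def add_pair_def\<close>)
  have g1: "Gm x a' (-j) = Gm x a (-j) * x(-j)" unfolding a'_def using assms
    by (simp add: Gm_def add_pair_def power_commutes)
  have g2: "Gm x a' j = x j * Gm x a j" unfolding a'_def using assms
    by (simp add: Gm_def add_pair_def)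
  define d where "d = sum_list (map (bz a) D)"
  define e where "e = sum_list (map (bz a) E)"
  let ?pA = "prod_list (map (Gm x a) A)"
  let ?pD = "prod_list (map (Gm x a) D)"
  let ?pE = "prod_list (map (Gm x a) E)"
  let ?pC = "prod_list (map (Gm x a) C)"
  let ?g1 = "Gm x a (-j)"
  let ?g2 = "Gm x a j"
  have hD: "?pD * x(-j) = emb (q^d) * x(-j) * ?pD"
  proof -
    have "?pD * x(-j) = emb (prod_list (map (\<lambda>l. q^(bz a l)) D)) * x(-j) * ?pD"
      by (rule prod_comm_r, rule comm_mid1) (use assms in \<open>auto simp: D_def\<close>)
    then show ?thesis unfolding d_def prod_list_pow .
  qed
  have hE: "x j * ?pE = emb (q^e) * ?pE * x j"
  proof -
    have "x j * ?pE = emb (prod_list (map (\<lambda>l. q^(bz a l)) E)) * ?pE * x j"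
      by (rule prod_comm_l, rule comm_mid2) (use assms in \<open>auto simp: E_def\<close>)
    then show ?thesis unfolding e_def prod_list_pow .
  qed
  have de: "d + e = (\<Sum>k\<in>{1-j..j-1} - {0}. a k)"
    unfolding d_def e_def bz_sum[symmetric] s4 by simp
  have "prod_list (map (Gm x a) [-int n..i-1]) * (x(-j) * x j) * prod_list (map (Gm x a) [i..int n])
      = ?pA * (?g1 * ((?pD * x(-j)) * ((x j * ?pE) * (?g2 * ?pC))))"
    unfolding s1 s2 by (simp add: mult.assoc)
  also have "... = ?pA * (?g1 * ((emb (q^d) * x(-j) * ?pD) * ((emb (q^e) * ?pE * x j) * (?g2 * ?pC))))"
    unfolding hD hE ..
  also have "... = emb (q^d) * (emb (q^e) * (?pA * ((?g1 * x(-j)) * (?pD * (?pE * ((x j * ?g2) * ?pC))))))"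
    by (simp only: mult.assoc emb_lc[of ?pA] emb_lc[of ?g1] emb_lc_x emb_lc[of ?pD])
  also have "... = emb (q^(d+e)) * normal_monomial x n a'"
    unfolding NM s3 prod_list.append map_append list.map prod_list.Cons mA mD mE mC g1 g2
    by (simp only: mult.assoc emb_mult2 power_add)
  finally show ?thesis unfolding de a'_def .
qed


lemma main:
  assumes "1 \<le> i" "i \<le> int n"
  shows "Omega emb q x n i * normal_monomial x n a =
       emb (\<Prod>l\<in>{- int n .. - i}. q ^ (2 * a l)) *
       (\<Sum>j\<in>{i .. int n}. emb (q ^ (nat (j - i) + (\<Sum>k\<in>{1 - j .. j - 1} - {0}. a k)))
           * normal_monomial x n (add_pair a j))"
proof -
  let ?O = "Omega emb q x n i"
  let ?P1 = "prod_list (map (Gm x a) [-int n..i-1])"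
  let ?P3 = "prod_list (map (Gm x a) [i..int n])"
  let ?E = "(\<Prod>l\<in>{- int n .. - i}. q ^ (2 * a l))"
  have sp: "[-int n..int n] = [-int n..i-1] @ [i..int n]" using upto_app[of "-int n" "i-1" "int n"] assms by simp
  have nm: "normal_monomial x n a = ?P1 * ?P3" unfolding NM sp by simp
  have t: "?P1 * (emb (q ^ nat (j - i)) * x (- j) * x j * ?P3) =
      emb (q ^ (nat (j - i) + (\<Sum>k\<in>{1 - j .. j - 1} - {0}. a k))) * normal_monomial x n (add_pair a j)"
    if j: "j \<in> {i..int n}" for j
  proof -
    have "?P1 * (emb (q ^ nat (j - i)) * x (- j) * x j * ?P3) = emb (q ^ nat (j - i)) * (?P1 * (x(-j) * x j) * ?P3)"
      by (simp only: mult.assoc emb_lc[of ?P1])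
    also have "... = emb (q ^ nat (j - i)) * (emb (q ^ (\<Sum>k\<in>{1-j..j-1} - {0}. a k)) * normal_monomial x n (add_pair a j))"
      using stepC[of i j a] j assms by simp
    finally show ?thesis by (simp only: emb_mult2 power_add)
  qed
  have "?O * normal_monomial x n a = (?O * ?P1) * ?P3" unfolding nm by (simp only: mult.assoc)
  also have "... = emb ?E * (?P1 * (?O * ?P3))" unfolding Om_P1[OF assms] by (simp only: mult.assoc)
  also have "?P1 * (?O * ?P3) = (\<Sum>j\<in>{i .. int n}. ?P1 * (emb (q ^ nat (j - i)) * x (- j) * x j * ?P3))"
    unfolding Omega_def sum_distrib_right sum_distrib_left ..
  also have "... = (\<Sum>j\<in>{i .. int n}. emb (q ^ (nat (j - i) + (\<Sum>k\<in>{1 - j .. j - 1} - {0}. a k))) * normal_monomial x n (add_pair a j))"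
    by (rule sum.cong[OF refl]) (rule t)
  finally show ?thesis .
qed

end

theorem lemma2p4:
  fixes emb :: "'k::field_char_0 \<Rightarrow> 'b::ring_1"
    and q :: 'k and n :: nat and x :: "int \<Rightarrow> 'b"
  assumes "n \<ge> 2"
    and "q \<noteq> 0" and "\<forall>m::nat. m > 0 \<longrightarrow> q ^ m \<noteq> 1"
    and "central_hom emb"
    and "qsymp_rel emb q n x"
  shows "\<forall>i\<in>{1 .. int n}. \<forall>a :: int \<Rightarrow> nat.
     Omega emb q x n i * normal_monomial x n a =
       emb (\<Prod>l\<in>{- int n .. - i}. q ^ (2 * a l)) *
       (\<Sum>j\<in>{i .. int n}. emb (q ^ (nat (j - i) + (\<Sum>k\<in>{1 - j .. j - 1} - {0}. a k)))
           * normal_monomial x n (add_pair a j))"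
  using main[OF assms(4,5,2)] by auto

end
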